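(* If $G$ is a tropical $\mathfrak{S}$-Gröbner basis of $I=\langle f_1,\dots,f_s\rangle$, then $G$ is a tropical Gröbner basis of $I$ for the tropical term order $\le$, i.e. the monomial ideal generated by $\{LM(g):g\in G\}$ equals $LM(I)$, the monomial ideal generated by $\{LM(f): f\in I\}$.
   Context: Let $k$ be a field with a valuation $val$, $A=k[X_1,\dots,X_n]$, $T$ the set of monomials of $A$, $|f|$ the total degree. Fix $w\in val(k^* )^n$ and a monomial order $\le_1$. Tropical term order: for $a,b\in k^*$, $ax^\alpha<bx^\beta$ if $|x^\alpha|<|x^\beta|$, or equal degrees and $val(a)+w\cdot\alpha>val(b)+w\cdot\beta$, or equal degrees, equal such quantities and $x^\alpha<_1x^\beta$; $ax^\alpha=_{\le}uax^\alpha$ when $val(u)=0$. $LT(f)$ is the largest term of $f$, $LM(f)$ its monomial. Let $f_1,\dots,f_s\in A$ ordered by increasing degree, $I=\langle f_1,\dots,f_s\rangle$, $(e_i)$ the canonical basis of $A^s$. Tame syzygy: $(a_1,\dots,a_s)\in A^s$ with $\sum a_jf_j=0$ and an $i$ with $a_i\neq0$, $a_j=0$ for $j>i$, $|a_jf_j|\le|a_if_i|$ for $j<i$; leading monomial $LM(a_i)e_i$; $LM(TSyz(F))$ is the submodule generated by these. Fix a degree-refining monomial order $\le_m$. Order $\le_{sign}$: $x^\alpha e_i\le_{sign}x^\beta e_j$ if $i<j$; or $i=j$ and $|x^\alpha f_i|<|x^\beta f_i|$; or $i=j$, equal degrees, and either ($x^\alpha e_i\notin LM(TSyz(F))$, $x^\beta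 e_i\in LM(TSyz(F))$), or (both in and $x^\alpha\le_mx^\beta$), or (both not in and $x^\alpha\le_mx^\beta$). $I_{\le_{sign}x^\alpha e_i}=\mathrm{Span}_k\{x^\beta f_j:x^\beta e_j\le_{sign}x^\alpha e_i\}$; the signature $S(f)$ of nonzero $f\in I$ is the smallest $x^\alpha e_i$ with $f\in I_{\le_{sign}x^\alpha e_i}$; $\tau S(g)$ means $\tau x^\alpha e_i$ if $S(g)=x^\alpha e_i$. $e\in I$ $\mathfrak{S}$-reduces to $g$ with $h\in I$ if $e-cth=g$ for some $t\in T,c\in k^*$, with $LT(g)<LT(e)$, $LM(g)\neq LM(e)$, $S(th)<_{sign}S(e)$; $\mathfrak{S}$-irreducible means no $h\in I$ $\mathfrak{S}$-reduces it. A tropical $\mathfrak{S}$-Gröbner basis is a set $G\subset I$ of $\mathfrak{S}$-irreducible polynomials such that every $\mathfrak{S}$-irreducible $h\in I$ has $g\in G$, $t\in T$ with $LM(tg)=LM(h)$ and $tS(g)=S(h)$. *)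

theory Defs
  imports Complex_Main "HOL-Library.Poly_Mapping"
begin

(* Polynomials in k[X_0,...,X_{n-1}]: finitely supported maps from exponent vectors
   (nat \<Rightarrow>\<^sub>0 nat) to coefficients; variables are indexed 0..n-1. *)
type_synonym 'k mpoly = "(nat \<Rightarrow>\<^sub>0 nat) \<Rightarrow>\<^sub>0 'k"

definition mons :: "nat \<Rightarrow> (nat \<Rightarrow>\<^sub>0 nat) set" where
  "mons n = {\<alpha>. Poly_Mapping.keys \<alpha> \<subseteq> {..<n}}"

definition polys :: "nat \<Rightarrow> ('k::zero) mpoly set" where
  "polys n = {f. Poly_Mapping.keys f \<subseteq> mons n}"

definition term_of :: "'k::zero \<Rightarrow> (nat \<Rightarrow>\<^sub>0 nat) \<Rightarrow> 'k mpoly" where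
  "term_of c \<alpha> = Poly_Mapping.single \<alpha> c"

abbreviation xmon :: "(nat \<Rightarrow>\<^sub>0 nat) \<Rightarrow> ('k::{zero,one}) mpoly" where
  "xmon \<alpha> \<equiv> term_of 1 \<alpha>"

definition mdeg :: "(nat \<Rightarrow>\<^sub>0 nat) \<Rightarrow> nat" where
  "mdeg \<alpha> = (\<Sum>i\<in>Poly_Mapping.keys \<alpha>. Poly_Mapping.lookup \<alpha> i)"

(* total degree; the zero polynomial gets degree 0 *)
definition tdeg :: "('k::zero) mpoly \<Rightarrow> nat" where
  "tdeg f = Max (insert 0 (mdeg ` Poly_Mapping.keys f))"

definition valuation :: "('k::field \<Rightarrow> real) \<Rightarrow> bool" where
  "valuation v \<longleftrightarrow>
     (\<forall>a b. a \<noteq> 0 \<longrightarrow> b \<noteq> 0 \<longrightarrow> v (a * b) = v a + v b) \<and>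
     (\<forall>a b. a \<noteq> 0 \<longrightarrow> b \<noteq> 0 \<longrightarrow> a + b \<noteq> 0 \<longrightarrow> v (a + b) \<ge> min (v a) (v b))"

definition monomial_order :: "nat \<Rightarrow> ((nat \<Rightarrow>\<^sub>0 nat) \<Rightarrow> (nat \<Rightarrow>\<^sub>0 nat) \<Rightarrow> bool) \<Rightarrow> bool" where
  "monomial_order n le \<longleftrightarrow>
     (\<forall>\<alpha>\<in>mons n. le \<alpha> \<alpha>) \<and>
     (\<forall>\<alpha>\<in>mons n. \<forall>\<beta>\<in>mons n. le \<alpha> \<beta> \<longrightarrow> le \<beta> \<alpha> \<longrightarrow> \<alpha> = \<beta>) \<and>
     (\<forall>\<alpha>\<in>mons n. \<forall>\<beta>\<in>mons n. \<forall>\<gamma>\<in>mons n. le \<alpha> \<beta> \<longrightarrow> le \<beta> \<gamma> \<longrightarrow> le \<alpha> \<gamma>) \<and>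
     (\<forall>\<alpha>\<in>mons n. \<forall>\<beta>\<in>mons n. le \<alpha> \<beta> \<or> le \<beta> \<alpha>) \<and>
     (\<forall>\<alpha>\<in>mons n. \<forall>\<beta>\<in>mons n. \<forall>\<gamma>\<in>mons n. le \<alpha> \<beta> \<longrightarrow> le (\<alpha> + \<gamma>) (\<beta> + \<gamma>)) \<and>
     (\<forall>\<alpha>\<in>mons n. le 0 \<alpha>)"

definition degree_refining :: "nat \<Rightarrow> ((nat \<Rightarrow>\<^sub>0 nat) \<Rightarrow> (nat \<Rightarrow>\<^sub>0 nat) \<Rightarrow> bool) \<Rightarrow> bool" where
  "degree_refining n le \<longleftrightarrow> monomial_order n le \<and>
     (\<forall>\<alpha>\<in>mons n. \<forall>\<beta>\<in>mons n. mdeg \<alpha> < mdeg \<beta> \<longrightarrow> le \<alpha> \<beta>)"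

definition wdot :: "(nat \<Rightarrow> real) \<Rightarrow> (nat \<Rightarrow>\<^sub>0 nat) \<Rightarrow> real" where
  "wdot w \<alpha> = (\<Sum>i\<in>Poly_Mapping.keys \<alpha>. w i * real (Poly_Mapping.lookup \<alpha> i))"

(* strict tropical term order on terms a x^alpha, represented as pairs (a, alpha), a \<noteq> 0 *)
definition trop_less :: "('k \<Rightarrow> real) \<Rightarrow> (nat \<Rightarrow> real) \<Rightarrow> ((nat \<Rightarrow>\<^sub>0 nat) \<Rightarrow> (nat \<Rightarrow>\<^sub>0 nat) \<Rightarrow> bool)
    \<Rightarrow> 'k \<times> (nat \<Rightarrow>\<^sub>0 nat) \<Rightarrow> 'k \<times> (nat \<Rightarrow>\<^sub>0 nat) \<Rightarrow> bool" where
  "trop_less val w le1 t u =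
     (let (a, \<alpha>) = t; (b, \<beta>) = u in
        mdeg \<alpha> < mdeg \<beta> \<or>
        (mdeg \<alpha> = mdeg \<beta> \<and> val a + wdot w \<alpha> > val b + wdot w \<beta>) \<or>
        (mdeg \<alpha> = mdeg \<beta> \<and> val a + wdot w \<alpha> = val b + wdot w \<beta> \<and> le1 \<alpha> \<beta> \<and> \<alpha> \<noteq> \<beta>))"

(* leading monomial / leading term for the tropical term order (meaningful for f \<noteq> 0) *)
definition LM :: "('k::zero \<Rightarrow> real) \<Rightarrow> (nat \<Rightarrow> real) \<Rightarrow> ((nat \<Rightarrow>\<^sub>0 nat) \<Rightarrow> (nat \<Rightarrow>\<^sub>0 nat) \<Rightarrow> bool)
    \<Rightarrow> 'k mpoly \<Rightarrow> (nat \<Rightarrow>\<^sub>0 nat)" where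
  "LM val w le1 f = (THE \<alpha>. \<alpha> \<in> Poly_Mapping.keys f \<and>
     (\<forall>\<beta>\<in>Poly_Mapping.keys f. \<beta> \<noteq> \<alpha> \<longrightarrow> trop_less val w le1 (Poly_Mapping.lookup f \<beta>, \<beta>) (Poly_Mapping.lookup f \<alpha>, \<alpha>)))"

definition LT :: "('k::zero \<Rightarrow> real) \<Rightarrow> (nat \<Rightarrow> real) \<Rightarrow> ((nat \<Rightarrow>\<^sub>0 nat) \<Rightarrow> (nat \<Rightarrow>\<^sub>0 nat) \<Rightarrow> bool)
    \<Rightarrow> 'k mpoly \<Rightarrow> 'k \<times> (nat \<Rightarrow>\<^sub>0 nat)" where
  "LT val w le1 f = (Poly_Mapping.lookup f (LM val w le1 f), LM val w le1 f)"

definition ideal_gen :: "nat \<Rightarrow> ('k::comm_ring_1) mpoly set \<Rightarrow> 'k mpoly set" where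
  "ideal_gen n S = {p. \<exists>J q. finite J \<and> J \<subseteq> S \<and> (\<forall>j\<in>J. q j \<in> polys n) \<and>
                         p = (\<Sum>j\<in>J. q j * j)}"

definition tame_syz :: "nat \<Rightarrow> (nat \<Rightarrow> ('k::comm_ring_1) mpoly) \<Rightarrow> nat \<Rightarrow> (nat \<Rightarrow> 'k mpoly) \<Rightarrow> nat \<Rightarrow> bool" where
  "tame_syz n F s a i \<longleftrightarrow>
     (\<forall>j<s. a j \<in> polys n) \<and> (\<Sum>j<s. a j * F j) = 0 \<and>
     i < s \<and> a i \<noteq> 0 \<and> (\<forall>j. i < j \<and> j < s \<longrightarrow> a j = 0) \<and>
     (\<forall>j<i. tdeg (a j * F j) \<le> tdeg (a i * F i))"

(* x^alpha e_i \<in> LM(TSyz(F)): the i-th component of the monomial submodule generated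
   by the LM(a_i) e_i, i.e. x^alpha lies in the ideal generated by those LM(a_i) *)
definition in_LM_TSyz :: "('k::comm_ring_1 \<Rightarrow> real) \<Rightarrow> (nat \<Rightarrow> real) \<Rightarrow> ((nat \<Rightarrow>\<^sub>0 nat) \<Rightarrow> (nat \<Rightarrow>\<^sub>0 nat) \<Rightarrow> bool)
    \<Rightarrow> nat \<Rightarrow> (nat \<Rightarrow> 'k mpoly) \<Rightarrow> nat \<Rightarrow> (nat \<Rightarrow>\<^sub>0 nat) \<times> nat \<Rightarrow> bool" where
  "in_LM_TSyz val w le1 n F s p =
     (let (\<alpha>, i) = p in
        (xmon \<alpha> :: 'k mpoly) \<in> ideal_gen n {xmon (LM val w le1 (a i)) | a. tame_syz n F s a i})"

definition sign_le :: "('k::comm_ring_1 \<Rightarrow> real) \<Rightarrow> (nat \<Rightarrow> real) \<Rightarrow> ((nat \<Rightarrow>\<^sub>0 nat) \<Rightarrow> (nat \<Rightarrow>\<^sub>0 nat) \<Rightarrow> bool)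
    \<Rightarrow> ((nat \<Rightarrow>\<^sub>0 nat) \<Rightarrow> (nat \<Rightarrow>\<^sub>0 nat) \<Rightarrow> bool)
    \<Rightarrow> nat \<Rightarrow> (nat \<Rightarrow> 'k mpoly) \<Rightarrow> nat \<Rightarrow> (nat \<Rightarrow>\<^sub>0 nat) \<times> nat \<Rightarrow> (nat \<Rightarrow>\<^sub>0 nat) \<times> nat \<Rightarrow> bool" where
  "sign_le val w le1 lem n F s p q =
     (let (\<alpha>, i) = p; (\<beta>, j) = q; inT = in_LM_TSyz val w le1 n F s in
        i < j \<or>
        (i = j \<and> tdeg ((xmon \<alpha> :: 'k mpoly) * F i) < tdeg (xmon \<beta> * F i)) \<or>
        (i = j \<and> tdeg (xmon \<alpha> * F i) = tdeg (xmon \<beta> * F i) \<and>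
           ((\<not> inT (\<alpha>, i) \<and> inT (\<beta>, i)) \<or>
            (inT (\<alpha>, i) \<and> inT (\<beta>, i) \<and> lem \<alpha> \<beta>) \<or>
            (\<not> inT (\<alpha>, i) \<and> \<not> inT (\<beta>, i) \<and> lem \<alpha> \<beta>))))"

definition sign_less where
  "sign_less val w le1 lem n F s p q \<longleftrightarrow> sign_le val w le1 lem n F s p q \<and> p \<noteq> q"

definition sig_span where
  "sig_span val w le1 lem n F s p =
     {f. \<exists>J c. finite J \<and> J \<subseteq> {q. fst q \<in> mons n \<and> snd q < s \<and> sign_le val w le1 lem n F s q p} \<and>
            f = (\<Sum>q\<in>J. term_of (c q) (fst q) * F (snd q))}"

(* signature of a nonzero f \<in> I *)
definition sig where
  "sig val w le1 lem n F s f = (THE p. p \<in> mons n \<times> {..<s} \<and> f \<in> sig_span val w le1 lem n F s p \<and>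
     (\<forall>q\<in>mons n \<times> {..<s}. f \<in> sig_span val w le1 lem n F s q \<longrightarrow> sign_le val w le1 lem n F s p q))"

abbreviation Iof :: "nat \<Rightarrow> (nat \<Rightarrow> ('k::comm_ring_1) mpoly) \<Rightarrow> nat \<Rightarrow> 'k mpoly set" where
  "Iof n F s \<equiv> ideal_gen n (F ` {..<s})"

(* e \<in> I S-reduces to g with h \<in> I; g = 0 counts as LT(g) < LT(e) *)
definition S_reduces where
  "S_reduces val w le1 lem n F s e h g \<longleftrightarrow>
     e \<in> Iof n F s \<and> e \<noteq> 0 \<and> h \<in> Iof n F s \<and> h \<noteq> 0 \<and>
     (\<exists>t\<in>mons n. \<exists>c. c \<noteq> 0 \<and> e - term_of c t * h = g \<and>
        (g = 0 \<or> (trop_less val w le1 (LT val w le1 g) (LT val w le1 e) \<and>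
                    LM val w le1 g \<noteq> LM val w le1 e)) \<and>
        sign_less val w le1 lem n F s (sig val w le1 lem n F s (xmon t * h)) (sig val w le1 lem n F s e))"

definition S_irreducible where
  "S_irreducible val w le1 lem n F s e \<longleftrightarrow> \<not> (\<exists>h g. S_reduces val w le1 lem n F s e h g)"

definition trop_S_GB where
  "trop_S_GB val w le1 lem n F s G \<longleftrightarrow>
     G \<subseteq> Iof n F s \<and>
     (\<forall>g\<in>G. g \<noteq> 0 \<and> S_irreducible val w le1 lem n F s g) \<and>
     (\<forall>h\<in>Iof n F s. h \<noteq> 0 \<and> S_irreducible val w le1 lem n F s h \<longrightarrow>
        (\<exists>g\<in>G. \<exists>t\<in>mons n. LM val w le1 (xmon t * g) = LM val w le1 h \<and>
            (t + fst (sig val w le1 lem n F s g), snd (sig val w le1 lem n F s g)) = sig val w le1 lem n F s h))"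

end

theory Submission
  imports Defs "HOL-Library.FuncSet" "HOL-Library.Product_Lexorder"
begin

lemma lookup_single_mult:
  "Poly_Mapping.lookup (Poly_Mapping.single t c * (h::('k::comm_ring_1) mpoly)) (t + b) = c * Poly_Mapping.lookup h b"
  by (simp add: lookup_mult lookup_single when_mult mult_when Sum_any_right_distrib[symmetric])

lemma keys_single_mult:
  assumes "(c::'k::field) \<noteq> 0"
  shows "Poly_Mapping.keys (Poly_Mapping.single t c * (h:: 'k mpoly)) = (+) t ` Poly_Mapping.keys h"
proof
  show "Poly_Mapping.keys (Poly_Mapping.single t c * h) \<subseteq> (+) t ` Poly_Mapping.keys h"
    using keys_mult[of "Poly_Mapping.single t c" h] assms by auto
  show "(+) t ` Poly_Mapping.keys h \<subseteq> Poly_Mapping.keys (Poly_Mapping.single t c * h)"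
    using assms by (auto simp: in_keys_iff lookup_single_mult)
qed

lemma mons_add: "a \<in> mons n \<Longrightarrow> b \<in> mons n \<Longrightarrow> a + b \<in> mons n"
  unfolding mons_def using keys_add[of a b] by auto
lemma mons_zero: "0 \<in> mons n" unfolding mons_def by auto

lemma polys_mult: "p \<in> polys n \<Longrightarrow> q \<in> polys n \<Longrightarrow> (p * q :: 'k::comm_ring_1 mpoly) \<in> polys n"
  unfolding polys_def using keys_mult[of p q] mons_add by blast
lemma polys_add: "p \<in> polys n \<Longrightarrow> q \<in> polys n \<Longrightarrow> (p + q :: 'k::comm_ring_1 mpoly) \<in> polys n"
  unfolding polys_def using keys_add[of p q] by blast
lemma polys_uminus: "p \<in> polys n \<Longrightarrow> (- p :: 'k::comm_ring_1 mpoly) \<in> polys n"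
  unfolding polys_def by simp
lemma polys_diff: "p \<in> polys n \<Longrightarrow> q \<in> polys n \<Longrightarrow> (p - q :: 'k::comm_ring_1 mpoly) \<in> polys n"
  using polys_add[of p n "-q"] polys_uminus[of q n] by simp
lemma polys_zero: "0 \<in> polys n" unfolding polys_def by simp
lemma polys_one: "(1::'k::comm_ring_1 mpoly) \<in> polys n" unfolding polys_def using mons_zero by simp
lemma polys_single: "t \<in> mons n \<Longrightarrow> Poly_Mapping.single t c \<in> polys n" unfolding polys_def by simp
lemma polys_sum: "finite J \<Longrightarrow> (\<forall>j\<in>J. f j \<in> polys n) \<Longrightarrow> (\<Sum>j\<in>J. f j :: 'k::comm_ring_1 mpoly) \<in> polys n"
  by (induction J rule: finite_induct) (auto intro: polys_add polys_zero)

lemma ideal_zero: "0 \<in> ideal_gen n S"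
  unfolding ideal_gen_def by (rule CollectI, rule exI[of _ "{}"]) auto

lemma ideal_base: "j \<in> S \<Longrightarrow> (j::'k::comm_ring_1 mpoly) \<in> ideal_gen n S"
  unfolding ideal_gen_def
  by (rule CollectI, rule exI[of _ "{j}"], rule exI[of _ "\<lambda>_. 1"]) (auto simp: polys_one)

lemma ideal_mult:
  assumes "p \<in> ideal_gen n S" "r \<in> polys n"
  shows "r * p \<in> ideal_gen n (S :: 'k::comm_ring_1 mpoly set)"
proof -
  from assms(1) obtain J q where J: "finite J" "J \<subseteq> S" "\<forall>j\<in>J. q j \<in> polys n" "p = (\<Sum>j\<in>J. q j * j)"
    unfolding ideal_gen_def by blast
  have "r * p = (\<Sum>j\<in>J. (r * q j) * j)" using J(4) by (simp add: sum_distrib_left mult.assoc)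
  moreover have "\<forall>j\<in>J. r * q j \<in> polys n" using J(3) assms(2) by (simp add: polys_mult)
  ultimately show ?thesis unfolding ideal_gen_def
    by (intro CollectI exI[of _ J] exI[of _ "\<lambda>j. r * q j"]) (use J in auto)
qed

lemma ideal_add:
  assumes "p1 \<in> ideal_gen n S" "p2 \<in> ideal_gen n S"
  shows "p1 + p2 \<in> ideal_gen n (S :: 'k::comm_ring_1 mpoly set)"
proof -
  from assms(1) obtain J1 q1 where J1: "finite J1" "J1 \<subseteq> S" "\<forall>j\<in>J1. q1 j \<in> polys n" "p1 = (\<Sum>j\<in>J1. q1 j * j)"
    unfolding ideal_gen_def by blast
  from assms(2) obtain J2 q2 where J2: "finite J2" "J2 \<subseteq> S" "\<forall>j\<in>J2. q2 j \<in> polys n" "p2 = (\<Sum>j\<in>J2. q2 j * j)"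
    unfolding ideal_gen_def by blast
  define q where "q j = (if j \<in> J1 then q1 j else 0) + (if j \<in> J2 then q2 j else 0)" for j
  have "(\<Sum>j\<in>J1 \<union> J2. q j * j) = (\<Sum>j\<in>J1 \<union> J2. (if j \<in> J1 then q1 j * j else 0)) + (\<Sum>j\<in>J1 \<union> J2. (if j \<in> J2 then q2 j * j else 0))"
    unfolding q_def sum.distrib[symmetric] by (rule sum.cong) (auto simp: distrib_right)
  also have "\<dots> = p1 + p2"
    using J1 J2 by (simp add: sum.If_cases Int_absorb1 Int_absorb2)
  finally have "p1 + p2 = (\<Sum>j\<in>J1 \<union> J2. q j * j)" by simp
  moreover have "\<forall>j\<in>J1 \<union> J2. q j \<in> polys n"
  proof
    fix j assume "j \<in> J1 \<union> J2"
    have a: "(if j \<in> J1 then q1 j else 0) \<in> polys n" using J1(3) by (simp add: polys_zero)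
    have b: "(if j \<in> J2 then q2 j else 0) \<in> polys n" using J2(3) by (simp add: polys_zero)
    show "q j \<in> polys n" unfolding q_def by (rule polys_add[OF a b])
  qed
  ultimately show ?thesis unfolding ideal_gen_def
    by (intro CollectI exI[of _ "J1 \<union> J2"] exI[of _ q]) (use J1 J2 in auto)
qed

lemma ideal_diff:
  assumes "p1 \<in> ideal_gen n S" "p2 \<in> ideal_gen n S"
  shows "p1 - p2 \<in> ideal_gen n (S :: 'k::comm_ring_1 mpoly set)"
proof -
  have "(-1) * p2 \<in> ideal_gen n S" by (rule ideal_mult[OF assms(2)]) (simp add: polys_uminus polys_one)
  from ideal_add[OF assms(1) this] show ?thesis by simp
qed

lemma ideal_subset_polys:
  assumes "S \<subseteq> polys n" shows "ideal_gen n S \<subseteq> (polys n :: 'k::comm_ring_1 mpoly set)"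
  unfolding ideal_gen_def using assms by (auto intro!: polys_sum polys_mult)

lemma ideal_mono: "S \<subseteq> T \<Longrightarrow> ideal_gen n S \<subseteq> ideal_gen n T"
  unfolding ideal_gen_def by blast

lemma ideal_sub:
  assumes "S \<subseteq> ideal_gen n T" shows "ideal_gen n S \<subseteq> ideal_gen n (T :: 'k::comm_ring_1 mpoly set)"
proof
  fix p assume "p \<in> ideal_gen n S"
  then obtain J q where J: "finite J" "J \<subseteq> S" "\<forall>j\<in>J. q j \<in> polys n" "p = (\<Sum>j\<in>J. q j * j)"
    unfolding ideal_gen_def by blast
  have "(\<Sum>j\<in>J. q j * j) \<in> ideal_gen n T" using J(1,2,3)
  proof (induction J rule: finite_induct)
    case empty then show ?case by (simp add: ideal_zero)
  next
    case (insert x F)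
    then show ?case using assms by (auto intro!: ideal_add ideal_mult)
  qed
  then show "p \<in> ideal_gen n T" using J by simp
qed

lemma val_mult: "valuation val \<Longrightarrow> a \<noteq> 0 \<Longrightarrow> b \<noteq> 0 \<Longrightarrow> val (a * b) = val a + val b"
  unfolding valuation_def by blast

lemma val_one: "valuation val \<Longrightarrow> val 1 = 0"
  using val_mult[of val 1 1] by simp

lemma val_neg: assumes "valuation val" "(a::'k::field) \<noteq> 0" shows "val (- a) = val a"
proof -
  have "val ((-1) * (-1::'k)) = val (-1) + val (-1)" by (rule val_mult[OF assms(1)]) auto
  then have "val (-1::'k) = 0" using val_one[OF assms(1)] by simp
  moreover have "val ((-1) * a) = val (-1) + val a" by (rule val_mult[OF assms(1)]) (use assms in auto)
  ultimately show ?thesis by simp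
qed

lemma val_ultra: "valuation val \<Longrightarrow> x \<noteq> 0 \<Longrightarrow> y \<noteq> 0 \<Longrightarrow> x + y \<noteq> 0 \<Longrightarrow> val (x + y) \<ge> min (val x) (val y)"
  unfolding valuation_def by blast

lemma val_diff_ge: assumes "valuation val" "(a::'k::field) \<noteq> 0" "b \<noteq> 0" "a \<noteq> b"
  shows "val (a - b) \<ge> min (val a) (val b)"
proof -
  have "val (a + (- b)) \<ge> min (val a) (val (- b))"
    using val_ultra[of val a "- b"] assms by simp
  then show ?thesis using val_neg[OF assms(1,3)] by simp
qed

lemma val_diff_eq: assumes "valuation val" "(a::'k::field) \<noteq> 0" "b \<noteq> 0" "val a < val b"
  shows "val (a - b) = val a" "a - b \<noteq> 0"
proof -
  have ne: "a \<noteq> b" using assms(4) by auto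
  then show "a - b \<noteq> 0" by simp
  have 1: "val (a - b) \<ge> min (val a) (val b)" by (rule val_diff_ge[OF assms(1-3) ne])
  have "a = (a - b) + b" by simp
  have "val ((a - b) + b) \<ge> min (val (a - b)) (val b)"
    using val_ultra[of val "a - b" b] assms ne by simp
  then have "val a \<ge> min (val (a - b)) (val b)" by simp
  then show "val (a - b) = val a" using 1 assms(4) by linarith
qed

lemma mdeg_alt: "finite S \<Longrightarrow> Poly_Mapping.keys \<alpha> \<subseteq> S \<Longrightarrow> mdeg \<alpha> = (\<Sum>i\<in>S. Poly_Mapping.lookup \<alpha> i)"
  unfolding mdeg_def by (rule sum.mono_neutral_left) (auto simp: in_keys_iff)

lemma wdot_alt: "finite S \<Longrightarrow> Poly_Mapping.keys \<alpha> \<subseteq> S \<Longrightarrow> wdot w \<alpha> = (\<Sum>i\<in>S. w i * real (Poly_Mapping.lookup \<alpha> i))"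
  unfolding wdot_def by (rule sum.mono_neutral_left) (auto simp: in_keys_iff)

lemma mdeg_add: "mdeg (\<alpha> + \<beta>) = mdeg \<alpha> + mdeg \<beta>"
proof -
  let ?S = "Poly_Mapping.keys \<alpha> \<union> Poly_Mapping.keys \<beta>"
  have "mdeg (\<alpha> + \<beta>) = (\<Sum>i\<in>?S. Poly_Mapping.lookup (\<alpha> + \<beta>) i)"
    by (rule mdeg_alt) (auto simp: keys_add)
  also have "\<dots> = (\<Sum>i\<in>?S. Poly_Mapping.lookup \<alpha> i) + (\<Sum>i\<in>?S. Poly_Mapping.lookup \<beta> i)"
    by (simp add: lookup_add sum.distrib)
  also have "\<dots> = mdeg \<alpha> + mdeg \<beta>" using mdeg_alt[of ?S \<alpha>] mdeg_alt[of ?S \<beta>] by simp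
  finally show ?thesis .
qed

lemma wdot_add: "wdot w (\<alpha> + \<beta>) = wdot w \<alpha> + wdot w \<beta>"
proof -
  let ?S = "Poly_Mapping.keys \<alpha> \<union> Poly_Mapping.keys \<beta>"
  have "wdot w (\<alpha> + \<beta>) = (\<Sum>i\<in>?S. w i * real (Poly_Mapping.lookup (\<alpha> + \<beta>) i))"
    by (rule wdot_alt) (auto simp: keys_add)
  also have "\<dots> = (\<Sum>i\<in>?S. w i * real (Poly_Mapping.lookup \<alpha> i)) + (\<Sum>i\<in>?S. w i * real (Poly_Mapping.lookup \<beta> i))"
    by (simp add: lookup_add sum.distrib distrib_left)
  also have "\<dots> = wdot w \<alpha> + wdot w \<beta>" using wdot_alt[of ?S \<alpha>] wdot_alt[of ?S \<beta>] by simp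
  finally show ?thesis .
qed

lemma trop_unf: "trop_less val w le1 (a, \<alpha>) (b, \<beta>) \<longleftrightarrow>
        mdeg \<alpha> < mdeg \<beta> \<or>
        (mdeg \<alpha> = mdeg \<beta> \<and> val a + wdot w \<alpha> > val b + wdot w \<beta>) \<or>
        (mdeg \<alpha> = mdeg \<beta> \<and> val a + wdot w \<alpha> = val b + wdot w \<beta> \<and> le1 \<alpha> \<beta> \<and> \<alpha> \<noteq> \<beta>)"
  by (simp add: trop_less_def)

lemma lex3_trans:
  assumes "(x::nat) < y \<or> (x = y \<and> ra > rb) \<or> (x = y \<and> ra = (rb::real) \<and> P)"
    "y < z \<or> (y = z \<and> rb > rc) \<or> (y = z \<and> rb = rc \<and> Q)" "P \<Longrightarrow> Q \<Longrightarrow> R"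
  shows "x < z \<or> (x = z \<and> ra > rc) \<or> (x = z \<and> ra = rc \<and> R)"
  using assms by (elim disjE conjE; simp)

context
  fixes n le1 assumes mo: "monomial_order n le1"
begin

lemma mo_parts1: "\<forall>\<alpha>\<in>mons n. \<forall>\<beta>\<in>mons n. le1 \<alpha> \<beta> \<longrightarrow> le1 \<beta> \<alpha> \<longrightarrow> \<alpha> = \<beta>"
  using mo unfolding monomial_order_def by (elim conjE) assumption

lemma mo_parts2: "\<forall>\<alpha>\<in>mons n. \<forall>\<beta>\<in>mons n. \<forall>\<gamma>\<in>mons n. le1 \<alpha> \<beta> \<longrightarrow> le1 \<beta> \<gamma> \<longrightarrow> le1 \<alpha> \<gamma>"
  using mo unfolding monomial_order_def by (elim conjE) assumption

lemma mo_parts3: "\<forall>\<alpha>\<in>mons n. \<forall>\<beta>\<in>mons n. le1 \<alpha> \<beta> \<or> le1 \<beta> \<alpha>"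
  using mo unfolding monomial_order_def by (elim conjE) assumption

lemma mo_parts4: "\<forall>\<alpha>\<in>mons n. \<forall>\<beta>\<in>mons n. \<forall>\<gamma>\<in>mons n. le1 \<alpha> \<beta> \<longrightarrow> le1 (\<alpha> + \<gamma>) (\<beta> + \<gamma>)"
  using mo unfolding monomial_order_def by (elim conjE) assumption

lemma mo_parts5: "\<forall>\<alpha>\<in>mons n. le1 \<alpha> \<alpha>"
  using mo unfolding monomial_order_def by (elim conjE) assumption

lemma le1_refl: "\<alpha> \<in> mons n \<Longrightarrow> le1 \<alpha> \<alpha>"
  by (rule mo_parts5[rule_format])

lemma le1_antisym: "\<alpha> \<in> mons n \<Longrightarrow> \<beta> \<in> mons n \<Longrightarrow> le1 \<alpha> \<beta> \<Longrightarrow> le1 \<beta> \<alpha> \<Longrightarrow> \<alpha> = \<beta>"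
  by (rule mo_parts1[rule_format])
lemma le1_trans: "\<alpha> \<in> mons n \<Longrightarrow> \<beta> \<in> mons n \<Longrightarrow> \<gamma> \<in> mons n \<Longrightarrow> le1 \<alpha> \<beta> \<Longrightarrow> le1 \<beta> \<gamma> \<Longrightarrow> le1 \<alpha> \<gamma>"
  by (rule mo_parts2[rule_format])
lemma le1_total: "\<alpha> \<in> mons n \<Longrightarrow> \<beta> \<in> mons n \<Longrightarrow> le1 \<alpha> \<beta> \<or> le1 \<beta> \<alpha>"
  by (rule mo_parts3[rule_format])
lemma le1_add: "\<alpha> \<in> mons n \<Longrightarrow> \<beta> \<in> mons n \<Longrightarrow> \<gamma> \<in> mons n \<Longrightarrow> le1 \<alpha> \<beta> \<Longrightarrow> le1 (\<alpha> + \<gamma>) (\<beta> + \<gamma>)"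
  by (rule mo_parts4[rule_format])

lemma trop_trans:
  assumes "\<alpha> \<in> mons n" "\<beta> \<in> mons n" "\<gamma> \<in> mons n"
    "trop_less val w le1 (a, \<alpha>) (b, \<beta>)" "trop_less val w le1 (b, \<beta>) (c, \<gamma>)"
  shows "trop_less val w le1 (a, \<alpha>) (c, \<gamma>)"
proof -
  have "le1 \<alpha> \<beta> \<Longrightarrow> le1 \<beta> \<gamma> \<Longrightarrow> \<alpha> \<noteq> \<beta> \<Longrightarrow> \<beta> \<noteq> \<gamma> \<Longrightarrow> le1 \<alpha> \<gamma> \<and> \<alpha> \<noteq> \<gamma>"
    using le1_trans[OF assms(1-3)] le1_antisym[OF assms(1,2)] by blast
  then show ?thesis unfolding trop_unf
    by (intro lex3_trans[OF assms(4)[unfolded trop_unf] assms(5)[unfolded trop_unf]]) blast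
qed

lemma trop_asym:
  assumes "\<alpha> \<in> mons n" "\<beta> \<in> mons n" "trop_less val w le1 (a, \<alpha>) (b, \<beta>)"
  shows "\<not> trop_less val w le1 (b, \<beta>) (a, \<alpha>)"
  using assms(3) le1_antisym[OF assms(1,2)] unfolding trop_unf by linarith

lemma trop_total:
  assumes "\<alpha> \<in> mons n" "\<beta> \<in> mons n" "\<alpha> \<noteq> \<beta>"
  shows "trop_less val w le1 (a, \<alpha>) (b, \<beta>) \<or> trop_less val w le1 (b, \<beta>) (a, \<alpha>)"
  using le1_total[OF assms(1,2)] assms(3) unfolding trop_unf
  by (cases "mdeg \<alpha>" "mdeg \<beta>" rule: linorder_cases;
      cases "val a + wdot w \<alpha>" "val b + wdot w \<beta>" rule: linorder_cases) auto

lemma trop_shift: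
  assumes "valuation val" "\<alpha> \<in> mons n" "\<beta> \<in> mons n" "t \<in> mons n" "c \<noteq> 0" "a \<noteq> 0" "b \<noteq> 0"
  shows "trop_less val w le1 (c * a, t + \<alpha>) (c * b, t + \<beta>) \<longleftrightarrow> trop_less val w le1 (a, \<alpha>) (b, \<beta>)"
proof -
  have le: "le1 (t + \<alpha>) (t + \<beta>) \<longleftrightarrow> le1 \<alpha> \<beta>"
  proof
    assume "le1 \<alpha> \<beta>" then show "le1 (t + \<alpha>) (t + \<beta>)"
      using le1_add[OF assms(2,3,4)] by (simp add: add.commute)
  next
    assume h: "le1 (t + \<alpha>) (t + \<beta>)"
    show "le1 \<alpha> \<beta>"
    proof (rule ccontr)
      assume "\<not> le1 \<alpha> \<beta>"
      then have "le1 \<beta> \<alpha>" using le1_total[OF assms(2,3)] by blast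
      then have "le1 (t + \<beta>) (t + \<alpha>)" using le1_add[OF assms(3,2,4)] by (simp add: add.commute)
      then have "t + \<alpha> = t + \<beta>" using h le1_antisym mons_add assms by blast
      then show False using \<open>\<not> le1 \<alpha> \<beta>\<close> \<open>le1 \<beta> \<alpha>\<close> by simp
    qed
  qed
  have v: "val (c * a) = val c + val a" "val (c * b) = val c + val b"
    using val_mult[OF assms(1,5,6)] val_mult[OF assms(1,5,7)] by auto
  have ne: "(t + \<alpha> \<noteq> t + \<beta>) = (\<alpha> \<noteq> \<beta>)" by simp
  have d1: "(mdeg t + mdeg \<alpha> < mdeg t + mdeg \<beta>) = (mdeg \<alpha> < mdeg \<beta>)" by simp
  have d2: "(mdeg t + mdeg \<alpha> = mdeg t + mdeg \<beta>) = (mdeg \<alpha> = mdeg \<beta>)" by simp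
  have r1: "(val c + val b + (wdot w t + wdot w \<beta>) < val c + val a + (wdot w t + wdot w \<alpha>))
     = (val b + wdot w \<beta> < val a + wdot w \<alpha>)" by linarith
  have r2: "(val c + val a + (wdot w t + wdot w \<alpha>) = val c + val b + (wdot w t + wdot w \<beta>))
     = (val a + wdot w \<alpha> = val b + wdot w \<beta>)" by linarith
  show ?thesis unfolding trop_unf mdeg_add wdot_add v le ne d1 d2 r1 r2 by (rule refl)
qed

end

lemma finite_max_rel:
  assumes "finite K" "K \<noteq> {}"
    "\<And>x y. x\<in>K \<Longrightarrow> y\<in>K \<Longrightarrow> x \<noteq> y \<Longrightarrow> r x y \<or> r y x"
    "\<And>x y z. x\<in>K \<Longrightarrow> y\<in>K \<Longrightarrow> z\<in>K \<Longrightarrow> r x y \<Longrightarrow> r y z \<Longrightarrow> r x z"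
  shows "\<exists>m\<in>K. \<forall>y\<in>K. y \<noteq> m \<longrightarrow> r y m"
  using assms(1,2,3,4)
proof (induction K rule: finite_ne_induct)
  case (singleton x) show ?case by (rule bexI[of _ x]) auto
next
  case (insert x F)
  have p1: "r a b \<or> r b a" if "a\<in>F" "b\<in>F" "a\<noteq>b" for a b
    using insert.prems(1)[of a b] that by blast
  have p2: "r a c" if "a\<in>F" "b\<in>F" "c\<in>F" "r a b" "r b c" for a b c
    using insert.prems(2)[of a b c] that by blast
  obtain m where m: "m \<in> F" "\<forall>y\<in>F. y \<noteq> m \<longrightarrow> r y m"
  proof -
    have "\<exists>m\<in>F. \<forall>y\<in>F. y \<noteq> m \<longrightarrow> r y m"
      apply (rule insert.IH)
       apply (rule p1; assumption)
      apply (rule p2; assumption)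
      done
    then show ?thesis using that by blast
  qed
  have mx: "m \<noteq> x" using m(1) insert.hyps by blast
  show ?case
  proof (cases "r x m")
    case True
    have "\<forall>y\<in>insert x F. y \<noteq> m \<longrightarrow> r y m" using m True by blast
    then show ?thesis using m(1) by blast
  next
    case False
    then have rmx: "r m x" using insert.prems(1)[of m x] m(1) mx by blast
    have "\<forall>y\<in>insert x F. y \<noteq> x \<longrightarrow> r y x"
    proof (intro ballI impI)
      fix y assume y: "y \<in> insert x F" "y \<noteq> x"
      then have yF: "y \<in> F" by simp
      show "r y x"
      proof (cases "y = m")
        case True then show ?thesis using rmx by simp
      next
        case False
        then have "r y m" using m(2) yF by blast
        then show ?thesis using insert.prems(2)[of y m x] rmx yF m(1) by blast
      qed
    qed
    then show ?thesis by blast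
  qed
qed

lemma trop_cong_left:
  assumes "val a' \<ge> val a" "trop_less val w le1 (a, \<beta>) (b, \<gamma>)"
  shows "trop_less val w le1 (a', \<beta>) (b, \<gamma>)"
proof -
  have h: "mdeg \<beta> < mdeg \<gamma> \<or> (mdeg \<beta> = mdeg \<gamma> \<and> val a + wdot w \<beta> > val b + wdot w \<gamma>) \<or>
        (mdeg \<beta> = mdeg \<gamma> \<and> val a + wdot w \<beta> = val b + wdot w \<gamma> \<and> le1 \<beta> \<gamma> \<and> \<beta> \<noteq> \<gamma>)"
    using assms(2) unfolding trop_unf .
  show ?thesis
  proof (cases "mdeg \<beta> < mdeg \<gamma>")
    case True then show ?thesis by (simp add: trop_unf)
  next
    case False
    then have d: "mdeg \<beta> = mdeg \<gamma>" and r: "val a + wdot w \<beta> \<ge> val b + wdot w \<gamma>" using h by auto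
    show ?thesis
    proof (cases "val a' + wdot w \<beta> > val b + wdot w \<gamma>")
      case True then show ?thesis using d by (simp add: trop_unf)
    next
      case F2: False
      then have "val a' = val a" "val a + wdot w \<beta> = val b + wdot w \<gamma>" using assms(1) r by linarith+
      then show ?thesis using h d F2 by (auto simp: trop_unf)
    qed
  qed
qed

lemma trop_cong_right:
  assumes "val b' = val b" "trop_less val w le1 (a, \<beta>) (b, \<gamma>)"
  shows "trop_less val w le1 (a, \<beta>) (b', \<gamma>)"
  using assms unfolding trop_unf by simp

lemma trop_same: "trop_less val w le1 (a, \<beta>) (b, \<beta>) \<Longrightarrow> val a > val b"
  unfolding trop_unf by simp

context
  fixes n le1 assumes mo: "monomial_order n le1"
begin

definition isLM where
  "isLM val w p \<alpha> \<longleftrightarrow> \<alpha> \<in> Poly_Mapping.keys p \<and>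
     (\<forall>\<beta>\<in>Poly_Mapping.keys p. \<beta> \<noteq> \<alpha> \<longrightarrow> trop_less val w le1 (Poly_Mapping.lookup p \<beta>, \<beta>) (Poly_Mapping.lookup p \<alpha>, \<alpha>))"

lemma isLM_unique:
  assumes "p \<in> polys n" "isLM val w p a" "isLM val w p b" shows "a = b"
proof (rule ccontr)
  assume ne: "a \<noteq> b"
  then have ne': "b \<noteq> a" by simp
  have m: "a \<in> mons n" "b \<in> mons n" using assms unfolding isLM_def polys_def by auto
  have A: "trop_less val w le1 (Poly_Mapping.lookup p b, b) (Poly_Mapping.lookup p a, a)"
    using assms(2,3) ne' unfolding isLM_def by blast
  have B: "trop_less val w le1 (Poly_Mapping.lookup p a, a) (Poly_Mapping.lookup p b, b)"
    using assms(2,3) ne unfolding isLM_def by blast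
  show False using trop_asym[OF mo m(2) m(1) A] B by simp
qed

lemma isLM_exists:
  assumes "p \<in> polys n" "(p :: ('k::zero) mpoly) \<noteq> 0" shows "\<exists>a. isLM val w p a"
proof -
  have K: "Poly_Mapping.keys p \<subseteq> mons n" using assms(1) unfolding polys_def by auto
  have "\<exists>m\<in>Poly_Mapping.keys p. \<forall>y\<in>Poly_Mapping.keys p. y \<noteq> m \<longrightarrow>
      trop_less val w le1 (Poly_Mapping.lookup p y, y) (Poly_Mapping.lookup p m, m)"
  proof (rule finite_max_rel)
    show "finite (Poly_Mapping.keys p)" by simp
    show "Poly_Mapping.keys p \<noteq> {}" using assms(2) by simp
    show "trop_less val w le1 (Poly_Mapping.lookup p x, x) (Poly_Mapping.lookup p y, y) \<or>
          trop_less val w le1 (Poly_Mapping.lookup p y, y) (Poly_Mapping.lookup p x, x)"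
      if "x \<in> Poly_Mapping.keys p" "y \<in> Poly_Mapping.keys p" "x \<noteq> y" for x y
    proof -
      have "x \<in> mons n" "y \<in> mons n" using that(1,2) K by auto
      from trop_total[OF mo this that(3)] show ?thesis .
    qed
    show "trop_less val w le1 (Poly_Mapping.lookup p x, x) (Poly_Mapping.lookup p z, z)"
      if "x \<in> Poly_Mapping.keys p" "y \<in> Poly_Mapping.keys p" "z \<in> Poly_Mapping.keys p"
        "trop_less val w le1 (Poly_Mapping.lookup p x, x) (Poly_Mapping.lookup p y, y)"
        "trop_less val w le1 (Poly_Mapping.lookup p y, y) (Poly_Mapping.lookup p z, z)" for x y z
    proof -
      have "x \<in> mons n" "y \<in> mons n" "z \<in> mons n" using that(1,2,3) K by auto
      from trop_trans[OF mo this that(4) that(5)] show ?thesis .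
    qed
  qed
  then show ?thesis unfolding isLM_def by blast
qed

lemma LM_isLM: "p \<in> polys n \<Longrightarrow> (p :: ('k::zero) mpoly) \<noteq> 0 \<Longrightarrow> isLM val w p (LM val w le1 p)"
proof -
  assume a: "p \<in> polys n" "p \<noteq> 0"
  obtain m where m: "isLM val w p m" using isLM_exists[OF a] by blast
  have "LM val w le1 p = m" unfolding LM_def
  proof (rule the_equality)
    show "m \<in> Poly_Mapping.keys p \<and> (\<forall>\<beta>\<in>Poly_Mapping.keys p. \<beta> \<noteq> m \<longrightarrow>
        trop_less val w le1 (Poly_Mapping.lookup p \<beta>, \<beta>) (Poly_Mapping.lookup p m, m))"
      using m unfolding isLM_def by blast
    show "x = m" if "x \<in> Poly_Mapping.keys p \<and> (\<forall>\<beta>\<in>Poly_Mapping.keys p. \<beta> \<noteq> x \<longrightarrow>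
        trop_less val w le1 (Poly_Mapping.lookup p \<beta>, \<beta>) (Poly_Mapping.lookup p x, x))" for x
    proof -
      have "isLM val w p x" using that unfolding isLM_def .
      from isLM_unique[OF a(1) this m] show ?thesis .
    qed
  qed
  then show ?thesis using m by simp
qed

lemma LM_eqI: "p \<in> polys n \<Longrightarrow> isLM val w (p :: ('k::zero) mpoly) m \<Longrightarrow> LM val w le1 p = m"
proof -
  assume a: "p \<in> polys n" "isLM val w p m"
  then have "p \<noteq> 0" unfolding isLM_def by auto
  from isLM_unique[OF a(1) LM_isLM[OF a(1) this] a(2)] show ?thesis .
qed

end

context
  fixes n le1 assumes mo: "monomial_order n le1"
begin

lemma LM_shift:
  assumes v: "valuation val" and c: "(c::'k::field) \<noteq> 0" and t: "t \<in> mons n"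
    and h: "h \<in> polys n" "h \<noteq> 0"
  shows "LM val w le1 (Poly_Mapping.single t c * h) = t + LM val w le1 h"
proof -
  let ?p = "Poly_Mapping.single t c * h"
  let ?m = "LM val w le1 h"
  have pp: "?p \<in> polys n" by (rule polys_mult[OF polys_single[OF t] h(1)])
  have hm: "isLM le1 val w h ?m" by (rule LM_isLM[OF mo h])
  have K: "Poly_Mapping.keys h \<subseteq> mons n" using h(1) unfolding polys_def by auto
  have kp: "Poly_Mapping.keys ?p = (+) t ` Poly_Mapping.keys h" by (rule keys_single_mult[OF c])
  have mk: "?m \<in> Poly_Mapping.keys h" using hm unfolding isLM_def[OF mo] by blast
  have "isLM le1 val w ?p (t + ?m)" unfolding isLM_def[OF mo]
  proof (intro conjI ballI impI)
    show "t + ?m \<in> Poly_Mapping.keys ?p" using kp mk by blast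
    fix \<beta> assume b: "\<beta> \<in> Poly_Mapping.keys ?p" "\<beta> \<noteq> t + ?m"
    then obtain b where bk: "b \<in> Poly_Mapping.keys h" and bb: "\<beta> = t + b" using kp by blast
    have bm: "b \<noteq> ?m" using b(2) bb by blast
    have lt: "trop_less val w le1 (Poly_Mapping.lookup h b, b) (Poly_Mapping.lookup h ?m, ?m)"
      using hm bk bm unfolding isLM_def[OF mo] by blast
    have nz: "Poly_Mapping.lookup h b \<noteq> 0" "Poly_Mapping.lookup h ?m \<noteq> 0"
      using bk mk by (auto simp: in_keys_iff)
    have "trop_less val w le1 (c * Poly_Mapping.lookup h b, t + b) (c * Poly_Mapping.lookup h ?m, t + ?m)"
      using trop_shift[OF mo v _ _ t c nz(1) nz(2)] lt bk mk K by blast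
    then show "trop_less val w le1 (Poly_Mapping.lookup ?p \<beta>, \<beta>) (Poly_Mapping.lookup ?p (t + ?m), t + ?m)"
      unfolding bb lookup_single_mult .
  qed
  then show ?thesis by (rule LM_eqI[OF mo pp])
qed

lemma LM_red:
  assumes v: "valuation val" and f: "f \<in> polys n" "(f :: 'k::field mpoly) \<noteq> 0" and g: "g \<in> polys n"
    and red: "g = 0 \<or> (trop_less val w le1 (LT val w le1 g) (LT val w le1 f) \<and> LM val w le1 g \<noteq> LM val w le1 f)"
  shows "f - g \<noteq> 0 \<and> LM val w le1 (f - g) = LM val w le1 f"
proof (cases "g = 0")
  case True then show ?thesis using f by simp
next
  case gz: False
  let ?u = "f - g"
  let ?m = "LM val w le1 f" let ?mg = "LM val w le1 g"
  let ?F = "Poly_Mapping.lookup f" let ?G = "Poly_Mapping.lookup g" let ?U = "Poly_Mapping.lookup ?u"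
  have U: "\<And>k. ?U k = ?F k - ?G k" by (simp add: lookup_minus)
  have up: "?u \<in> polys n" by (rule polys_diff[OF f(1) g])
  have Kf: "Poly_Mapping.keys f \<subseteq> mons n" using f(1) unfolding polys_def by auto
  have Kg: "Poly_Mapping.keys g \<subseteq> mons n" using g unfolding polys_def by auto
  have fm: "isLM le1 val w f ?m" by (rule LM_isLM[OF mo f])
  have gm: "isLM le1 val w g ?mg" by (rule LM_isLM[OF mo g gz])
  have mk: "?m \<in> Poly_Mapping.keys f" using fm unfolding isLM_def[OF mo] by blast
  have mgk: "?mg \<in> Poly_Mapping.keys g" using gm unfolding isLM_def[OF mo] by blast
  have mm: "?m \<in> mons n" "?mg \<in> mons n" using mk mgk Kf Kg by auto
  have H: "trop_less val w le1 (?G ?mg, ?mg) (?F ?m, ?m)" and neq: "?mg \<noteq> ?m"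
    using red gz unfolding LT_def by auto
  have Fm: "?F ?m \<noteq> 0" using mk by (simp add: in_keys_iff)
  have gbelow: "trop_less val w le1 (?G b, b) (?F ?m, ?m)" if "b \<in> Poly_Mapping.keys g" for b
  proof (cases "b = ?mg")
    case True then show ?thesis using H by simp
  next
    case False
    then have "trop_less val w le1 (?G b, b) (?G ?mg, ?mg)" using gm that unfolding isLM_def[OF mo] by blast
    moreover have "b \<in> mons n" using that Kg by auto
    ultimately show ?thesis using trop_trans[OF mo _ mm(2) mm(1) _ H] by blast
  qed
  have fbelow: "trop_less val w le1 (?F b, b) (?F ?m, ?m)" if "b \<in> Poly_Mapping.keys f" "b \<noteq> ?m" for b
    using fm that unfolding isLM_def[OF mo] by blast
  have Um: "?U ?m \<noteq> 0 \<and> val (?U ?m) = val (?F ?m)"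
  proof (cases "?G ?m = 0")
    case True then show ?thesis using U Fm by simp
  next
    case False
    then have "?m \<in> Poly_Mapping.keys g" by (simp add: in_keys_iff)
    from gbelow[OF this] have "val (?G ?m) > val (?F ?m)" by (rule trop_same)
    from val_diff_eq[OF v Fm False this] show ?thesis using U by simp
  qed
  have "isLM le1 val w ?u ?m" unfolding isLM_def[OF mo]
  proof (intro conjI ballI impI)
    show "?m \<in> Poly_Mapping.keys ?u" using Um by (simp add: in_keys_iff)
    fix b assume b: "b \<in> Poly_Mapping.keys ?u" "b \<noteq> ?m"
    have Ub: "?U b \<noteq> 0" using b(1) by (simp add: in_keys_iff)
    have "trop_less val w le1 (?U b, b) (?F ?m, ?m)"
    proof (cases "?G b = 0")
      case True
      then have "?U b = ?F b" using U by simp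
      moreover have "b \<in> Poly_Mapping.keys f" using Ub True U by (simp add: in_keys_iff)
      ultimately show ?thesis using fbelow[OF _ b(2)] by simp
    next
      case Gb: False
      then have bg: "b \<in> Poly_Mapping.keys g" by (simp add: in_keys_iff)
      show ?thesis
      proof (cases "?F b = 0")
        case True
        then have "?U b = - ?G b" using U by simp
        then have "val (?U b) \<ge> val (?G b)" using val_neg[OF v Gb] by simp
        from trop_cong_left[OF this gbelow[OF bg]] show ?thesis .
      next
        case Fb: False
        then have bf: "b \<in> Poly_Mapping.keys f" by (simp add: in_keys_iff)
        have ne: "?F b \<noteq> ?G b" using Ub U by simp
        have ge: "val (?U b) \<ge> min (val (?F b)) (val (?G b))"
          using val_diff_ge[OF v Fb Gb ne] U by simp
        show ?thesis
        proof (cases "val (?F b) \<le> val (?G b)")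
          case True
          then have "val (?U b) \<ge> val (?F b)" using ge by simp
          from trop_cong_left[OF this fbelow[OF bf b(2)]] show ?thesis .
        next
          case False
          then have "val (?U b) \<ge> val (?G b)" using ge by simp
          from trop_cong_left[OF this gbelow[OF bg]] show ?thesis .
        qed
      qed
    qed
    then show "trop_less val w le1 (?U b, b) (?U ?m, ?m)"
      using trop_cong_right[of val "?U ?m" "?F ?m"] Um by blast
  qed
  then have "LM val w le1 ?u = ?m" by (rule LM_eqI[OF mo up])
  then show ?thesis using Um by auto
qed

end

lemma lookup_le_mdeg: "Poly_Mapping.lookup \<beta> i \<le> mdeg \<beta>"
proof (cases "i \<in> Poly_Mapping.keys \<beta>")
  case True then show ?thesis unfolding mdeg_def by (intro member_le_sum) auto
next
  case False then show ?thesis by (simp add: in_keys_iff)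
qed

lemma finite_mons_deg: "finite {\<beta> \<in> mons n. mdeg \<beta> \<le> d}"
proof -
  let ?S = "{\<beta> \<in> mons n. mdeg \<beta> \<le> d}"
  let ?r = "\<lambda>\<beta>. restrict (Poly_Mapping.lookup \<beta>) {..<n}"
  have inj: "inj_on ?r ?S"
  proof (rule inj_onI)
    fix x y assume x: "x \<in> ?S" and y: "y \<in> ?S" and e: "?r x = ?r y"
    show "x = y"
    proof (rule poly_mapping_eqI)
      fix k show "Poly_Mapping.lookup x k = Poly_Mapping.lookup y k"
      proof (cases "k < n")
        case True then show ?thesis using fun_cong[OF e, of k] by simp
      next
        case False
        then have "k \<notin> Poly_Mapping.keys x" "k \<notin> Poly_Mapping.keys y" using x y unfolding mons_def by auto
        then show ?thesis by (simp add: in_keys_iff)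
      qed
    qed
  qed
  have "?r ` ?S \<subseteq> Pi\<^sub>E {..<n} (\<lambda>_. {0..d})"
  proof
    fix z assume "z \<in> ?r ` ?S"
    then obtain \<beta> where b: "\<beta> \<in> ?S" "z = ?r \<beta>" by blast
    have "\<forall>i\<in>{..<n}. Poly_Mapping.lookup \<beta> i \<in> {0..d}"
      using b(1) lookup_le_mdeg[of \<beta>] by (auto intro: order_trans)
    then show "z \<in> Pi\<^sub>E {..<n} (\<lambda>_. {0..d})" unfolding b(2) by (simp add: restrict_PiE_iff)
  qed
  moreover have "finite (Pi\<^sub>E {..<n} (\<lambda>_. {0..d::nat}))" by (intro finite_PiE) auto
  ultimately have "finite (?r ` ?S)" by (rule finite_subset)
  then show ?thesis using inj by (rule finite_imageD)
qed

definition kap :: "('k::comm_ring_1 \<Rightarrow> real) \<Rightarrow> (nat \<Rightarrow> real) \<Rightarrow> ((nat \<Rightarrow>\<^sub>0 nat) \<Rightarrow> (nat \<Rightarrow>\<^sub>0 nat) \<Rightarrow> bool)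
    \<Rightarrow> nat \<Rightarrow> (nat \<Rightarrow> 'k mpoly) \<Rightarrow> nat \<Rightarrow> (nat \<Rightarrow>\<^sub>0 nat) \<times> nat \<Rightarrow> nat \<times> nat \<times> nat" where
  "kap val w le1 n F s p = (snd p, tdeg ((xmon (fst p) :: 'k mpoly) * F (snd p)),
      if in_LM_TSyz val w le1 n F s (fst p, snd p) then 1 else 0)"

lemma sign_le_kap:
  "sign_le val w le1 lem n F s p q \<longleftrightarrow>
     kap val w le1 n F s p < kap val w le1 n F s q \<or>
     (kap val w le1 n F s p = kap val w le1 n F s q \<and> lem (fst p) (fst q))"
  by (cases p; cases q) (auto simp: sign_le_def Let_def kap_def)

definition rank :: "((nat \<Rightarrow>\<^sub>0 nat) \<Rightarrow> (nat \<Rightarrow>\<^sub>0 nat) \<Rightarrow> bool) \<Rightarrow> nat \<Rightarrow> (nat \<Rightarrow>\<^sub>0 nat) \<Rightarrow> nat" where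
  "rank lem n \<alpha> = card {\<beta> \<in> mons n. lem \<beta> \<alpha> \<and> \<beta> \<noteq> \<alpha>}"

context
  fixes lem n assumes dr: "degree_refining n lem"
begin

lemma lmo: "monomial_order n lem" using dr unfolding degree_refining_def by blast
lemma ldeg: "\<alpha> \<in> mons n \<Longrightarrow> \<beta> \<in> mons n \<Longrightarrow> mdeg \<alpha> < mdeg \<beta> \<Longrightarrow> lem \<alpha> \<beta>"
  using dr unfolding degree_refining_def by blast

lemma finite_pred: assumes "\<alpha> \<in> mons n" shows "finite {\<beta> \<in> mons n. lem \<beta> \<alpha> \<and> \<beta> \<noteq> \<alpha>}"
proof (rule finite_subset[OF _ finite_mons_deg[of n "mdeg \<alpha>"]])
  show "{\<beta> \<in> mons n. lem \<beta> \<alpha> \<and> \<beta> \<noteq> \<alpha>} \<subseteq> {\<beta> \<in> mons n. mdeg \<beta> \<le> mdeg \<alpha>}"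
  proof
    fix \<beta> assume b: "\<beta> \<in> {\<beta> \<in> mons n. lem \<beta> \<alpha> \<and> \<beta> \<noteq> \<alpha>}"
    show "\<beta> \<in> {\<beta> \<in> mons n. mdeg \<beta> \<le> mdeg \<alpha>}"
    proof (rule ccontr)
      assume "\<beta> \<notin> {\<beta> \<in> mons n. mdeg \<beta> \<le> mdeg \<alpha>}"
      then have "mdeg \<alpha> < mdeg \<beta>" using b by auto
      then have "lem \<alpha> \<beta>" using ldeg[OF assms] b by blast
      then have "\<alpha> = \<beta>" using le1_antisym[OF lmo assms] b by blast
      then show False using b by blast
    qed
  qed
qed

lemma rank_mono:
  assumes "\<alpha> \<in> mons n" "\<beta> \<in> mons n" "lem \<alpha> \<beta>" "\<alpha> \<noteq> \<beta>"
  shows "rank lem n \<alpha> < rank lem n \<beta>"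
  unfolding rank_def
proof (rule psubset_card_mono[OF finite_pred[OF assms(2)]])
  show "{\<gamma> \<in> mons n. lem \<gamma> \<alpha> \<and> \<gamma> \<noteq> \<alpha>} \<subset> {\<gamma> \<in> mons n. lem \<gamma> \<beta> \<and> \<gamma> \<noteq> \<beta>}"
  proof
    show "{\<gamma> \<in> mons n. lem \<gamma> \<alpha> \<and> \<gamma> \<noteq> \<alpha>} \<subseteq> {\<gamma> \<in> mons n. lem \<gamma> \<beta> \<and> \<gamma> \<noteq> \<beta>}"
    proof
      fix \<gamma> assume g: "\<gamma> \<in> {\<gamma> \<in> mons n. lem \<gamma> \<alpha> \<and> \<gamma> \<noteq> \<alpha>}"
      then have gm: "\<gamma> \<in> mons n" and ga: "lem \<gamma> \<alpha>" "\<gamma> \<noteq> \<alpha>" by auto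
      have "lem \<gamma> \<beta>" by (rule le1_trans[OF lmo gm assms(1) assms(2) ga(1) assms(3)])
      moreover have "\<gamma> \<noteq> \<beta>"
      proof
        assume "\<gamma> = \<beta>"
        then have "lem \<beta> \<alpha>" using ga by simp
        then have "\<alpha> = \<beta>" using le1_antisym[OF lmo assms(1,2) assms(3)] by blast
        then show False using assms(4) by blast
      qed
      ultimately show "\<gamma> \<in> {\<gamma> \<in> mons n. lem \<gamma> \<beta> \<and> \<gamma> \<noteq> \<beta>}" using gm by blast
    qed
    have "\<alpha> \<in> {\<gamma> \<in> mons n. lem \<gamma> \<beta> \<and> \<gamma> \<noteq> \<beta>}" using assms by blast
    moreover have "\<alpha> \<notin> {\<gamma> \<in> mons n. lem \<gamma> \<alpha> \<and> \<gamma> \<noteq> \<alpha>}" by blast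
    ultimately show "{\<gamma> \<in> mons n. lem \<gamma> \<alpha> \<and> \<gamma> \<noteq> \<alpha>} \<noteq> {\<gamma> \<in> mons n. lem \<gamma> \<beta> \<and> \<gamma> \<noteq> \<beta>}" by blast
  qed
qed

end

lemma poly_sum_singles: "(q::'k::comm_ring_1 mpoly) = (\<Sum>\<beta>\<in>Poly_Mapping.keys q. Poly_Mapping.single \<beta> (Poly_Mapping.lookup q \<beta>))"
proof (rule poly_mapping_eqI)
  fix k
  have "Poly_Mapping.lookup (\<Sum>\<beta>\<in>Poly_Mapping.keys q. Poly_Mapping.single \<beta> (Poly_Mapping.lookup q \<beta>)) k
     = (\<Sum>\<beta>\<in>Poly_Mapping.keys q. if \<beta> = k then Poly_Mapping.lookup q \<beta> else 0)"
    by (simp add: lookup_sum lookup_single when_def)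
  also have "\<dots> = Poly_Mapping.lookup q k" by (simp add: in_keys_iff)
  finally show "Poly_Mapping.lookup q k = Poly_Mapping.lookup (\<Sum>\<beta>\<in>Poly_Mapping.keys q. Poly_Mapping.single \<beta> (Poly_Mapping.lookup q \<beta>)) k" by simp
qed

context
  fixes val :: "'k::field \<Rightarrow> real" and w :: "nat \<Rightarrow> real"
    and le1 lem :: "(nat \<Rightarrow>\<^sub>0 nat) \<Rightarrow> (nat \<Rightarrow>\<^sub>0 nat) \<Rightarrow> bool"
    and n s :: nat and F :: "nat \<Rightarrow> 'k mpoly"
  assumes dr: "degree_refining n lem" and Fp: "\<forall>j<s. F j \<in> polys n"
begin

abbreviation "SL \<equiv> sign_le val w le1 lem n F s"
abbreviation "KK \<equiv> kap val w le1 n F s"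
abbreviation "Dm \<equiv> mons n \<times> {..<s}"


lemma sl_refl: assumes "p \<in> Dm" shows "SL p p"
proof -
  have "fst p \<in> mons n" using assms by auto
  then have "lem (fst p) (fst p)" by (rule le1_refl[OF lmo[OF dr]])
  then show ?thesis unfolding sign_le_kap by simp
qed

lemma kap_snd: "KK p = KK q \<Longrightarrow> snd p = snd q"
  unfolding kap_def by simp


lemma sl_antisym: assumes "p \<in> Dm" "q \<in> Dm" "SL p q" "SL q p" shows "p = q"
proof -
  have A: "KK p < KK q \<or> (KK p = KK q \<and> lem (fst p) (fst q))" using assms(3) unfolding sign_le_kap .
  have B: "KK q < KK p \<or> (KK q = KK p \<and> lem (fst q) (fst p))" using assms(4) unfolding sign_le_kap .
  have e: "KK p = KK q"
  proof (rule ccontr)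
    assume ne: "KK p \<noteq> KK q"
    then have "KK p < KK q" using A by blast
    moreover have "KK q < KK p" using B ne by auto
    ultimately show False by simp
  qed
  have l: "lem (fst p) (fst q)" "lem (fst q) (fst p)" using A B e by auto
  have m: "fst p \<in> mons n" "fst q \<in> mons n" using assms(1,2) by auto
  have "fst p = fst q" by (rule le1_antisym[OF lmo[OF dr] m l])
  moreover have "snd p = snd q" using kap_snd[OF e] .
  ultimately show ?thesis by (simp add: prod_eq_iff)
qed


lemma sl_trans: assumes "p \<in> Dm" "q \<in> Dm" "r \<in> Dm" "SL p q" "SL q r" shows "SL p r"
proof -
  have m: "fst p \<in> mons n" "fst q \<in> mons n" "fst r \<in> mons n" using assms(1-3) by auto
  have t: "lem (fst p) (fst q) \<Longrightarrow> lem (fst q) (fst r) \<Longrightarrow> lem (fst p) (fst r)"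
    by (rule le1_trans[OF lmo[OF dr] m])
  have A: "KK p < KK q \<or> (KK p = KK q \<and> lem (fst p) (fst q))" using assms(4) unfolding sign_le_kap .
  have B: "KK q < KK r \<or> (KK q = KK r \<and> lem (fst q) (fst r))" using assms(5) unfolding sign_le_kap .
  show ?thesis unfolding sign_le_kap
  proof (cases "KK p < KK q")
    case True
    then have "KK p < KK r" using B less_trans[of "KK p" "KK q" "KK r"] by auto
    then show "KK p < KK r \<or> (KK p = KK r \<and> lem (fst p) (fst r))" by simp
  next
    case False
    then have e: "KK p = KK q" "lem (fst p) (fst q)" using A by auto
    show "KK p < KK r \<or> (KK p = KK r \<and> lem (fst p) (fst r))"
    proof (cases "KK q < KK r")
      case True then show ?thesis using e by simp
    next
      case False then have "KK q = KK r" "lem (fst q) (fst r)" using B by auto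
      then show ?thesis using e t by simp
    qed
  qed
qed

lemma sl_total: assumes "p \<in> Dm" "q \<in> Dm" shows "SL p q \<or> SL q p"
proof -
  have m: "fst p \<in> mons n" "fst q \<in> mons n" using assms(1,2) by auto
  have l: "lem (fst p) (fst q) \<or> lem (fst q) (fst p)" by (rule le1_total[OF lmo[OF dr] m])
  consider "KK p < KK q" | "KK p = KK q" | "KK q < KK p" using linorder_less_linear by blast
  then show ?thesis
  proof cases
    case 1 then show ?thesis by (simp add: sign_le_kap)
  next
    case 2 then show ?thesis using l by (simp add: sign_le_kap)
  next
    case 3 then show ?thesis by (simp add: sign_le_kap)
  qed
qed


lemma wf_sl: "wf {(p, q). p \<in> Dm \<and> q \<in> Dm \<and> sign_less val w le1 lem n F s p q}"
proof (rule wf_subset[OF wf_inv_image[OF wf, of "\<lambda>p. (KK p, rank lem n (fst p))"]])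
  show "{(p, q). p \<in> Dm \<and> q \<in> Dm \<and> sign_less val w le1 lem n F s p q}
     \<subseteq> inv_image {(x, y). x < y} (\<lambda>p. (KK p, rank lem n (fst p)))"
  proof
    fix x assume "x \<in> {(p, q). p \<in> Dm \<and> q \<in> Dm \<and> sign_less val w le1 lem n F s p q}"
    then obtain p q where x: "x = (p, q)" and h: "p \<in> Dm" "q \<in> Dm" "sign_less val w le1 lem n F s p q" by blast
    then have sl: "SL p q" and ne: "p \<noteq> q" unfolding sign_less_def by auto
    have "(KK p, rank lem n (fst p)) < (KK q, rank lem n (fst q))"
    proof (cases "KK p < KK q")
      case True then show ?thesis by simp
    next
      case False
      then have e: "KK p = KK q" and l: "lem (fst p) (fst q)" using sl unfolding sign_le_kap by auto
      then have "snd p = snd q" using kap_snd by blast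
      then have "fst p \<noteq> fst q" using ne by (auto simp: prod_eq_iff)
      have m: "fst p \<in> mons n" "fst q \<in> mons n" using h(1,2) by auto
      have "rank lem n (fst p) < rank lem n (fst q)" by (rule rank_mono[OF dr m l \<open>fst p \<noteq> fst q\<close>])
      then show ?thesis using e by simp
    qed
    then show "x \<in> inv_image {(x, y). x < y} (\<lambda>p. (KK p, rank lem n (fst p)))" unfolding x by simp
  qed
qed

end

context
  fixes val :: "'k::field \<Rightarrow> real" and w :: "nat \<Rightarrow> real"
    and le1 lem :: "(nat \<Rightarrow>\<^sub>0 nat) \<Rightarrow> (nat \<Rightarrow>\<^sub>0 nat) \<Rightarrow> bool"
    and n s :: nat and F :: "nat \<Rightarrow> 'k mpoly"
  assumes dr: "degree_refining n lem" and Fp: "\<forall>j<s. F j \<in> polys n"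
begin

lemma exists_span:
  assumes f: "f \<in> Iof n F s" "f \<noteq> 0"
  shows "\<exists>p\<in>mons n \<times> {..<s}. f \<in> sig_span val w le1 lem n F s p"
proof -
  from f(1) obtain J q where J: "finite J" "J \<subseteq> F ` {..<s}" "\<forall>j\<in>J. q j \<in> polys n"
    and fs: "f = (\<Sum>j\<in>J. q j * j)"
    unfolding ideal_gen_def by blast
  define idx where "idx j = (SOME i. i < s \<and> F i = j)" for j
  have idx: "idx j < s \<and> F (idx j) = j" if "j \<in> J" for j
  proof -
    have "\<exists>i. i < s \<and> F i = j" using J(2) that by blast
    then show ?thesis unfolding idx_def by (rule someI_ex)
  qed
  define Sg where "Sg = Sigma J (\<lambda>j. Poly_Mapping.keys (q j))"
  define \<phi> where "\<phi> x = (snd x, idx (fst x))" for x :: "'k mpoly \<times> (nat \<Rightarrow>\<^sub>0 nat)"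
  define KS where "KS = \<phi> ` Sg"
  define c where "c x = Poly_Mapping.lookup (q (F (snd x))) (fst x)" for x :: "(nat \<Rightarrow>\<^sub>0 nat) \<times> nat"
  have finSg: "finite Sg" unfolding Sg_def using J(1) by simp
  have inj: "inj_on \<phi> Sg"
  proof (rule inj_onI)
    fix x y assume x: "x \<in> Sg" and y: "y \<in> Sg" and e: "\<phi> x = \<phi> y"
    have "fst x \<in> J" "fst y \<in> J" using x y unfolding Sg_def by auto
    then have "fst x = F (idx (fst x))" "fst y = F (idx (fst y))" using idx by auto
    moreover have "idx (fst x) = idx (fst y)" "snd x = snd y" using e unfolding \<phi>_def by auto
    ultimately show "x = y" by (simp add: prod_eq_iff)
  qed
  have "f = (\<Sum>j\<in>J. \<Sum>\<beta>\<in>Poly_Mapping.keys (q j). Poly_Mapping.single \<beta> (Poly_Mapping.lookup (q j) \<beta>) * j)"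
    unfolding fs by (subst poly_sum_singles) (simp add: sum_distrib_right)
  also have "\<dots> = (\<Sum>x\<in>Sg. Poly_Mapping.single (snd x) (Poly_Mapping.lookup (q (fst x)) (snd x)) * fst x)"
    unfolding Sg_def by (subst sum.Sigma) (use J(1) in \<open>auto simp: case_prod_beta\<close>)
  also have "\<dots> = (\<Sum>x\<in>Sg. term_of (c (\<phi> x)) (fst (\<phi> x)) * F (snd (\<phi> x)))"
  proof (rule sum.cong[OF refl])
    fix x assume "x \<in> Sg"
    then have "fst x \<in> J" unfolding Sg_def by auto
    then have e: "F (idx (fst x)) = fst x" using idx by auto
    show "Poly_Mapping.single (snd x) (Poly_Mapping.lookup (q (fst x)) (snd x)) * fst x =
          term_of (c (\<phi> x)) (fst (\<phi> x)) * F (snd (\<phi> x))"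
      unfolding \<phi>_def c_def term_of_def by (simp add: e)
  qed
  also have "\<dots> = (\<Sum>y\<in>KS. term_of (c y) (fst y) * F (snd y))"
    unfolding KS_def by (rule sum.reindex[OF inj, symmetric, unfolded comp_def])
  finally have fK: "f = (\<Sum>y\<in>KS. term_of (c y) (fst y) * F (snd y))" .
  have KD: "KS \<subseteq> mons n \<times> {..<s}"
  proof
    fix y assume "y \<in> KS"
    then obtain x where x: "x \<in> Sg" "y = \<phi> x" unfolding KS_def by blast
    then have xj: "fst x \<in> J" and xk: "snd x \<in> Poly_Mapping.keys (q (fst x))" unfolding Sg_def by auto
    have "q (fst x) \<in> polys n" using J(3) xj by blast
    then have "snd x \<in> mons n" using xk unfolding polys_def by blast
    moreover have "idx (fst x) < s" using idx[OF xj] by blast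
    ultimately show "y \<in> mons n \<times> {..<s}" unfolding x(2) \<phi>_def by simp
  qed
  have finK: "finite KS" unfolding KS_def using finSg by simp
  have neK: "KS \<noteq> {}"
  proof
    assume "KS = {}" then have "f = 0" using fK by simp
    then show False using f(2) by blast
  qed
  have "\<exists>m\<in>KS. \<forall>y\<in>KS. y \<noteq> m \<longrightarrow> sign_le val w le1 lem n F s y m"
  proof (rule finite_max_rel[OF finK neK])
    show "sign_le val w le1 lem n F s x y \<or> sign_le val w le1 lem n F s y x" if "x \<in> KS" "y \<in> KS" "x \<noteq> y" for x y
    proof -
      have "x \<in> mons n \<times> {..<s}" "y \<in> mons n \<times> {..<s}" using that(1,2) KD by auto
      from sl_total[OF dr Fp this] show ?thesis .
    qed
    show "sign_le val w le1 lem n F s x z" if "x \<in> KS" "y \<in> KS" "z \<in> KS"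
      "sign_le val w le1 lem n F s x y" "sign_le val w le1 lem n F s y z" for x y z
    proof -
      have "x \<in> mons n \<times> {..<s}" "y \<in> mons n \<times> {..<s}" "z \<in> mons n \<times> {..<s}" using that(1-3) KD by auto
      from sl_trans[OF dr Fp this that(4) that(5)] show ?thesis .
    qed
  qed
  then obtain m where m: "m \<in> KS" "\<forall>y\<in>KS. y \<noteq> m \<longrightarrow> sign_le val w le1 lem n F s y m" by blast
  have mD: "m \<in> mons n \<times> {..<s}" using m(1) KD by blast
  have sub: "KS \<subseteq> {q. fst q \<in> mons n \<and> snd q < s \<and> sign_le val w le1 lem n F s q m}"
  proof
    fix y assume y: "y \<in> KS"
    have yD: "y \<in> mons n \<times> {..<s}" using y KD by blast
    have "sign_le val w le1 lem n F s y m"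
    proof (cases "y = m")
      case True then show ?thesis using sl_refl[OF dr Fp mD] by simp
    next
      case False then show ?thesis using m(2) y by blast
    qed
    then show "y \<in> {q. fst q \<in> mons n \<and> snd q < s \<and> sign_le val w le1 lem n F s q m}" using yD by auto
  qed
  have "f \<in> sig_span val w le1 lem n F s m"
    unfolding sig_span_def using finK sub fK by blast
  then show ?thesis using mD by blast
qed


lemma sig_in:
  assumes f: "f \<in> Iof n F s" "f \<noteq> 0"
  shows "sig val w le1 lem n F s f \<in> mons n \<times> {..<s}"
proof -
  let ?D = "mons n \<times> {..<s}"
  let ?P = "{p \<in> ?D. f \<in> sig_span val w le1 lem n F s p}"
  let ?R = "{(p, q). p \<in> ?D \<and> q \<in> ?D \<and> sign_less val w le1 lem n F s p q}"
  obtain p0 where p0: "p0 \<in> ?P" using exists_span[OF f] by blast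
  obtain p where pP: "p \<in> ?P" and pmin: "\<And>y. (y, p) \<in> ?R \<Longrightarrow> y \<notin> ?P"
    using wfE_min[OF wf_sl[OF dr Fp] p0] by blast
  have pD: "p \<in> ?D" and pf: "f \<in> sig_span val w le1 lem n F s p" using pP by auto
  have pl: "sign_le val w le1 lem n F s p q" if "q \<in> ?D" "f \<in> sig_span val w le1 lem n F s q" for q
  proof (rule ccontr)
    assume nl: "\<not> sign_le val w le1 lem n F s p q"
    then have "sign_le val w le1 lem n F s q p" using sl_total[OF dr Fp pD that(1)] by blast
    moreover have "q \<noteq> p" using nl sl_refl[OF dr Fp pD] by blast
    ultimately have "(q, p) \<in> ?R" using that(1) pD unfolding sign_less_def by blast
    then have "q \<notin> ?P" by (rule pmin)
    then show False using that by blast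
  qed
  have "sig val w le1 lem n F s f = p" unfolding sig_def
  proof (rule the_equality)
    show "p \<in> ?D \<and> f \<in> sig_span val w le1 lem n F s p \<and>
        (\<forall>q\<in>?D. f \<in> sig_span val w le1 lem n F s q \<longrightarrow> sign_le val w le1 lem n F s p q)"
      using pD pf pl by blast
    fix x assume x: "x \<in> ?D \<and> f \<in> sig_span val w le1 lem n F s x \<and>
        (\<forall>q\<in>?D. f \<in> sig_span val w le1 lem n F s q \<longrightarrow> sign_le val w le1 lem n F s x q)"
    then have xD: "x \<in> ?D" and "sign_le val w le1 lem n F s x p" using pD pf by blast+
    moreover have "sign_le val w le1 lem n F s p x" using pl x by blast
    ultimately show "x = p" using sl_antisym[OF dr Fp xD pD] by blast
  qed
  then show ?thesis using pD by simp
qed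

end

lemma main_aux:
  fixes val :: "'k::field \<Rightarrow> real" and w :: "nat \<Rightarrow> real"
    and le1 lem :: "(nat \<Rightarrow>\<^sub>0 nat) \<Rightarrow> (nat \<Rightarrow>\<^sub>0 nat) \<Rightarrow> bool"
    and n s :: nat and F :: "nat \<Rightarrow> 'k mpoly" and G :: "'k mpoly set"
  assumes "valuation val"
    and "\<forall>i<n. w i \<in> val ` (UNIV - {0})"
    and "monomial_order n le1"
    and "degree_refining n lem"
    and "\<forall>j<s. F j \<in> polys n"
    and "\<forall>i j. i \<le> j \<and> j < s \<longrightarrow> tdeg (F i) \<le> tdeg (F j)"
    and "trop_S_GB val w le1 lem n F s G"
  shows "ideal_gen n ((\<lambda>g. (xmon (LM val w le1 g) :: 'b::comm_ring_1 mpoly)) ` G) =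
         ideal_gen n {(xmon (LM val w le1 f) :: 'b mpoly) | f. f \<in> Iof n F s \<and> f \<noteq> 0}"
proof -
  note v = assms(1) and mo = assms(3) and dr = assms(4) and Fp = assms(5)
  let ?I = "Iof n F s"
  let ?LG = "ideal_gen n ((\<lambda>g. (xmon (LM val w le1 g) :: 'b mpoly)) ` G)"
  let ?D = "mons n \<times> {..<s}"
  let ?R = "{(p, q). p \<in> ?D \<and> q \<in> ?D \<and> sign_less val w le1 lem n F s p q}"
  have Ip: "?I \<subseteq> polys n" by (rule ideal_subset_polys) (use Fp in auto)
  have GI: "G \<subseteq> ?I" and Gnz: "\<And>g. g \<in> G \<Longrightarrow> g \<noteq> 0"
    and GB: "\<And>h. h \<in> ?I \<Longrightarrow> h \<noteq> 0 \<Longrightarrow> S_irreducible val w le1 lem n F s h \<Longrightarrow>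
        (\<exists>g\<in>G. \<exists>t\<in>mons n. LM val w le1 (xmon t * g) = LM val w le1 h \<and>
            (t + fst (sig val w le1 lem n F s g), snd (sig val w le1 lem n F s g)) = sig val w le1 lem n F s h)"
    using assms(7) unfolding trop_S_GB_def by blast+
  have xm: "xmon t = Poly_Mapping.single t (1::'k)" for t unfolding term_of_def by simp
  define Q where "Q p \<longleftrightarrow> (\<forall>f. f \<in> ?I \<longrightarrow> f \<noteq> 0 \<longrightarrow> sig val w le1 lem n F s f = p \<longrightarrow> xmon (LM val w le1 f) \<in> ?LG)" for p
  have step: "Q p" if IH: "\<And>y. (y, p) \<in> ?R \<Longrightarrow> Q y" for p
    unfolding Q_def
    proof (intro allI impI)
      fix f assume fI: "f \<in> ?I" and fz: "f \<noteq> 0" and fs: "sig val w le1 lem n F s f = p"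
      have fp: "f \<in> polys n" using fI Ip by blast
      show "xmon (LM val w le1 f) \<in> ?LG"
      proof (cases "S_irreducible val w le1 lem n F s f")
        case True
        obtain g t where g: "g \<in> G" and t: "t \<in> mons n" and e: "LM val w le1 (xmon t * g) = LM val w le1 f"
          using GB[OF fI fz True] by blast
        have gp: "g \<in> polys n" using g GI Ip by blast
        have "LM val w le1 (xmon t * g) = t + LM val w le1 g"
          unfolding xm by (rule LM_shift[OF mo v one_neq_zero t gp Gnz[OF g]])
        then have eq: "(xmon (LM val w le1 f) :: 'b mpoly) = xmon t * xmon (LM val w le1 g)"
          using e by (simp add: term_of_def mult_single)
        have mem: "xmon (LM val w le1 g) \<in> ?LG" by (rule ideal_base) (use g in blast)
        have xt: "(xmon t :: 'b mpoly) \<in> polys n" unfolding term_of_def by (rule polys_single[OF t])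
        have "xmon t * xmon (LM val w le1 g) \<in> ?LG" by (rule ideal_mult[OF mem xt])
        then show ?thesis by (simp only: eq)
      next
        case False
        then obtain h g' where "S_reduces val w le1 lem n F s f h g'" unfolding S_irreducible_def by blast
        then obtain t c where hI: "h \<in> ?I" and hz: "h \<noteq> 0" and t: "t \<in> mons n" and c: "c \<noteq> 0"
          and fg: "f - term_of c t * h = g'"
          and red: "g' = 0 \<or> (trop_less val w le1 (LT val w le1 g') (LT val w le1 f) \<and> LM val w le1 g' \<noteq> LM val w le1 f)"
          and sl: "sign_less val w le1 lem n F s (sig val w le1 lem n F s (xmon t * h)) (sig val w le1 lem n F s f)"
          unfolding S_reduces_def by blast
        have hp: "h \<in> polys n" using hI Ip by blast
        let ?f' = "xmon t * h"
        have xt: "(xmon t :: 'k mpoly) \<in> polys n" unfolding term_of_def by (rule polys_single[OF t])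
        have f'I: "?f' \<in> ?I" by (rule ideal_mult[OF hI xt])
        have "Poly_Mapping.keys ?f' = (+) t ` Poly_Mapping.keys h" unfolding xm by (rule keys_single_mult) simp
        then have f'z: "?f' \<noteq> 0" using hz by auto
        have A: "sig val w le1 lem n F s ?f' \<in> ?D" by (rule sig_in[OF dr Fp f'I f'z])
        have B: "sig val w le1 lem n F s f \<in> ?D" by (rule sig_in[OF dr Fp fI fz])
        have "(sig val w le1 lem n F s ?f', p) \<in> ?R"
          unfolding fs[symmetric] using sl A B by simp
        then have "Q (sig val w le1 lem n F s ?f')" by (rule IH)
        then have good: "xmon (LM val w le1 ?f') \<in> ?LG" using f'I f'z unfolding Q_def by blast
        have L1: "LM val w le1 ?f' = t + LM val w le1 h"
          unfolding xm by (rule LM_shift[OF mo v one_neq_zero t hp hz])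
        have L2: "LM val w le1 (term_of c t * h) = t + LM val w le1 h"
          unfolding term_of_def by (rule LM_shift[OF mo v c t hp hz])
        have g'p: "g' \<in> polys n" unfolding fg[symmetric] term_of_def
          by (rule polys_diff[OF fp polys_mult[OF polys_single[OF t] hp]])
        have "f - g' \<noteq> 0 \<and> LM val w le1 (f - g') = LM val w le1 f"
          by (rule LM_red[OF mo v fp fz g'p red])
        moreover have "f - g' = term_of c t * h" using fg by (simp add: algebra_simps)
        ultimately have "LM val w le1 f = t + LM val w le1 h" using L2 by simp
        then show ?thesis using good L1 by simp
      qed
    qed
  have allQ: "Q p" for p
    by (rule wf_induct_rule[OF wf_sl[OF dr Fp]]) (rule step)
  show ?thesis
  proof
    show "?LG \<subseteq> ideal_gen n {(xmon (LM val w le1 f) :: 'b mpoly) | f. f \<in> ?I \<and> f \<noteq> 0}"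
      by (rule ideal_mono) (use GI Gnz in blast)
    show "ideal_gen n {(xmon (LM val w le1 f) :: 'b mpoly) | f. f \<in> ?I \<and> f \<noteq> 0} \<subseteq> ?LG"
    proof (rule ideal_sub)
      show "{(xmon (LM val w le1 f) :: 'b mpoly) | f. f \<in> ?I \<and> f \<noteq> 0} \<subseteq> ?LG"
        using allQ unfolding Q_def by blast
    qed
  qed
qed


theorem mainTheorem2:
  fixes val :: "'k::field \<Rightarrow> real" and w :: "nat \<Rightarrow> real"
    and le1 lem :: "(nat \<Rightarrow>\<^sub>0 nat) \<Rightarrow> (nat \<Rightarrow>\<^sub>0 nat) \<Rightarrow> bool"
    and n s :: nat and F :: "nat \<Rightarrow> 'k mpoly" and G :: "'k mpoly set"
  assumes "valuation val"
    and "\<forall>i<n. w i \<in> val ` (UNIV - {0})"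
    and "monomial_order n le1"
    and "degree_refining n lem"
    and "\<forall>j<s. F j \<in> polys n"
    and "\<forall>i j. i \<le> j \<and> j < s \<longrightarrow> tdeg (F i) \<le> tdeg (F j)"
    and "trop_S_GB val w le1 lem n F s G"
  shows "ideal_gen n ((\<lambda>g. xmon (LM val w le1 g)) ` G) =
         ideal_gen n {xmon (LM val w le1 f) | f. f \<in> Iof n F s \<and> f \<noteq> 0}"
  by (rule main_aux[OF assms])

end
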